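(* Let $T>0$, let $q:[0,T]\to\mathbb{R}_+$ be a gauge function such that $q^2$ is of class $C^2$ on $(0,T]$ and $\frac{dq^2}{d\tau}$ is non-increasing, and let $B^q$ be the $q$-Brownian sheet on $[0,T]^d$ defined in the context. Then for any $x,y\in[0,T]^d$, $$E\big([B^q(x)-B^q(y)]^2\big)\le\big[2d\,q^{2(d-1)}(T)\big]\,q^2(|x-y|).$$
   Context: A gauge function is a strictly increasing continuous function $q:[0,T]\to\mathbb{R}_+$ with $q(0)=0$. Let $k=\sqrt{dq^2/d\tau}$ on $(0,T]$. Let $W$ be a Brownian sheet (Gaussian white noise) on $\mathbb{R}_+^d$. The $q$-Brownian sheet is $$B^q(x)=\int_{[0,x]}\prod_{l=1}^d k(x_l-y_l)\,W(dy),\qquad x\in[0,T]^d,$$ a Wiener integral over the rectangle $[0,x]=\prod_l[0,x_l]$; for $d=1$ this is $B^q(x)=\int_0^x k(x-y)\,dW(y)$ with $W$ a standard Brownian motion. *)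

theory Defs
  imports "HOL-Probability.Probability"
begin

definition sq_integrable :: "(real^'d \<Rightarrow> real) \<Rightarrow> bool" where
  "sq_integrable h \<longleftrightarrow> h \<in> borel_measurable lborel \<and> integrable lborel (\<lambda>u. (h u)\<^sup>2)"

text \<open>Wiener integral against Gaussian white noise (isonormal Gaussian process):
  W h is the Wiener integral of h; each W h is centred Gaussian with variance
  the squared L2 norm of h, and covariances are given by the L2 inner product.\<close>
definition white_noise_integral ::
  "'w measure \<Rightarrow> ((real^'d \<Rightarrow> real) \<Rightarrow> 'w \<Rightarrow> real) \<Rightarrow> bool" where
  "white_noise_integral M W \<longleftrightarrow> prob_space M \<and>
    (\<forall>h. sq_integrable h \<longrightarrow>
       W h \<in> borel_measurable M \<and>
       ((\<integral>u. (h u)\<^sup>2 \<partial>lborel) = 0 \<longrightarrow> (AE \<omega> in M. W h \<omega> = 0)) \<and>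
       ((\<integral>u. (h u)\<^sup>2 \<partial>lborel) > 0 \<longrightarrow>
          distributed M lborel (W h) (normal_density 0 (sqrt (\<integral>u. (h u)\<^sup>2 \<partial>lborel))))) \<and>
    (\<forall>h g. sq_integrable h \<longrightarrow> sq_integrable g \<longrightarrow>
       (\<integral>\<omega>. W h \<omega> * W g \<omega> \<partial>M) = (\<integral>u. h u * g u \<partial>lborel))"

definition gauge_function :: "real \<Rightarrow> (real \<Rightarrow> real) \<Rightarrow> bool" where
  "gauge_function T q \<longleftrightarrow> strict_mono_on {0..T} q \<and> continuous_on {0..T} q \<and>
     q 0 = 0 \<and> (\<forall>t\<in>{0..T}. 0 \<le> q t)"

definition sheet_kernel :: "(real \<Rightarrow> real) \<Rightarrow> real^'d \<Rightarrow> real^'d \<Rightarrow> real" where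
  "sheet_kernel k x u = (if (\<forall>l. 0 \<le> u$l \<and> u$l \<le> x$l) then (\<Prod>l\<in>UNIV. k (x$l - u$l)) else 0)"

text \<open>The q-Brownian sheet B^q(x) = Wiener integral of the kernel, with k = sqrt(dq^2/dtau).\<close>
definition q_brownian_sheet ::
  "((real^'d \<Rightarrow> real) \<Rightarrow> 'w \<Rightarrow> real) \<Rightarrow> (real \<Rightarrow> real) \<Rightarrow> real^'d \<Rightarrow> 'w \<Rightarrow> real" where
  "q_brownian_sheet W k x = W (sheet_kernel k x)"

end

theory Submission
  imports Defs
begin

lemma lborel_prod_aux:
  fixes h :: "'a::euclidean_space \<Rightarrow> real \<Rightarrow> real"
  assumes int: "\<And>b. b \<in> Basis \<Longrightarrow> integrable lborel (h b)"
  shows "integrable lborel (\<lambda>x::'a. \<Prod>b\<in>Basis. h b (x \<bullet> b))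
    \<and> (\<integral>x. (\<Prod>b\<in>Basis. h b (x \<bullet> b)) \<partial>lborel) = (\<Prod>b\<in>Basis. \<integral>x. h b x \<partial>lborel)"
proof -
  interpret P: product_sigma_finite "\<lambda>_::'a. lborel::real measure"
    by (simp add: product_sigma_finite_def lborel.sigma_finite_measure_axioms)
  have mh: "\<And>b. b \<in> Basis \<Longrightarrow> h b \<in> borel_measurable borel"
    using int by auto
  have mg: "(\<lambda>x::'a. \<Prod>b\<in>Basis. h b (x \<bullet> b)) \<in> borel_measurable borel"
    using mh by (intro borel_measurable_prod) (auto intro: measurable_compose[OF borel_measurable_inner[OF measurable_ident_sets[OF refl] measurable_const]])
  have mf: "(\<lambda>f. \<Sum>b\<in>Basis. f b *\<^sub>R (b::'a)) \<in> measurable (\<Pi>\<^sub>M b\<in>Basis. lborel) borel"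
    by measurable
  have eq: "\<And>f. f \<in> space (\<Pi>\<^sub>M b\<in>Basis. lborel) \<Longrightarrow>
     (\<Prod>b\<in>Basis. h b ((\<Sum>b'\<in>Basis. f b' *\<^sub>R (b'::'a)) \<bullet> b)) = (\<Prod>b\<in>Basis. h b (f b))"
    by (intro prod.cong refl) (simp add: inner_sum_left inner_Basis if_distrib sum.delta cong: if_cong)
  have i1: "integrable (\<Pi>\<^sub>M b\<in>Basis. lborel) (\<lambda>f. \<Prod>b\<in>Basis. h b (f b))"
    by (rule P.product_integrable_prod) (auto intro: int)
  have "integrable (\<Pi>\<^sub>M b\<in>Basis. lborel) (\<lambda>f. \<Prod>b\<in>Basis. h b ((\<Sum>b'\<in>Basis. f b' *\<^sub>R (b'::'a)) \<bullet> b))"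
    using i1 Bochner_Integration.integrable_cong[OF refl eq] by simp
  then have I: "integrable lborel (\<lambda>x::'a. \<Prod>b\<in>Basis. h b (x \<bullet> b))"
    by (subst lborel_eq) (subst integrable_distr_eq[OF mf mg], simp)
  have "(\<integral>x. (\<Prod>b\<in>Basis. h b (x \<bullet> b)) \<partial>lborel) =
     (\<integral>f. (\<Prod>b\<in>Basis. h b ((\<Sum>b'\<in>Basis. f b' *\<^sub>R (b'::'a)) \<bullet> b)) \<partial>(\<Pi>\<^sub>M b\<in>Basis. lborel))"
    by (subst lborel_eq) (rule integral_distr[OF mf mg])
  also have "\<dots> = (\<integral>f. (\<Prod>b\<in>Basis. h b (f b)) \<partial>(\<Pi>\<^sub>M b\<in>Basis. lborel))"
    by (rule Bochner_Integration.integral_cong[OF refl eq])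
  also have "\<dots> = (\<Prod>b\<in>Basis. \<integral>x. h b x \<partial>lborel)"
    by (rule P.product_integral_prod) (auto intro: int)
  finally show ?thesis using I by simp
qed

lemma vec_prod_integral:
  fixes h :: "'d::finite \<Rightarrow> real \<Rightarrow> real"
  assumes int: "\<And>l. integrable lborel (h l)"
  shows "integrable lborel (\<lambda>x::real^'d. \<Prod>l\<in>UNIV. h l (x $ l))
    \<and> (\<integral>x. (\<Prod>l\<in>UNIV. h l (x $ l)) \<partial>lborel) = (\<Prod>l\<in>UNIV. \<integral>x. h l x \<partial>lborel)"
proof -
  define g where "g b = h (SOME l. b = axis l (1::real))" for b :: "real^'d"
  have gax: "g (axis l 1) = h l" for l
    unfolding g_def by (rule arg_cong[where f=h]) (metis (mono_tags, lifting) axis_eq_axis someI_ex zero_neq_one)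
  have inj: "inj_on (\<lambda>l::'d. axis l (1::real)) UNIV"
    by (auto simp: inj_on_def axis_eq_axis)
  have B: "(Basis :: (real^'d) set) = (\<lambda>l. axis l 1) ` UNIV"
    by (auto simp: Basis_vec_def)
  have 1: "(\<Prod>b\<in>Basis. g b (x \<bullet> b)) = (\<Prod>l\<in>UNIV. h l (x $ l))" for x :: "real^'d"
    unfolding B by (subst prod.reindex[OF inj]) (simp add: gax inner_axis)
  have 2: "(\<Prod>b\<in>(Basis::(real^'d) set). \<integral>x. g b x \<partial>lborel) = (\<Prod>l\<in>UNIV. \<integral>x. h l x \<partial>lborel)"
    unfolding B by (subst prod.reindex[OF inj]) (simp add: gax)
  have "\<And>b. b \<in> (Basis::(real^'d) set) \<Longrightarrow> integrable lborel (g b)"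
    unfolding B using int gax by auto
  from lborel_prod_aux[of g, OF this] show ?thesis unfolding 1 2 by simp
qed

locale qset =
  fixes T :: real and q Q' Q'' :: "real \<Rightarrow> real"
  assumes T: "T > 0" and gf: "gauge_function T q"
    and d1: "\<And>t. t \<in> {0<..T} \<Longrightarrow> ((\<lambda>s. (q s)\<^sup>2) has_real_derivative Q' t) (at t within {0<..T})"
    and d2: "\<And>t. t \<in> {0<..T} \<Longrightarrow> (Q' has_real_derivative Q'' t) (at t within {0<..T})"
    and mono: "\<And>s t. 0 < s \<Longrightarrow> s \<le> t \<Longrightarrow> t \<le> T \<Longrightarrow> Q' t \<le> Q' s"
begin

lemma q0: "q 0 = 0" using gf by (simp add: gauge_function_def)

lemma q_nonneg: "0 \<le> t \<Longrightarrow> t \<le> T \<Longrightarrow> 0 \<le> q t"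
  using gf by (simp add: gauge_function_def)

lemma q_mono: "0 \<le> s \<Longrightarrow> s \<le> t \<Longrightarrow> t \<le> T \<Longrightarrow> q s \<le> q t"
  using gf unfolding gauge_function_def
  by (meson atLeastAtMost_iff order_trans mono_onD strict_mono_on_imp_mono_on)

lemma q2_mono: "0 \<le> s \<Longrightarrow> s \<le> t \<Longrightarrow> t \<le> T \<Longrightarrow> (q s)\<^sup>2 \<le> (q t)\<^sup>2"
  using q_mono q_nonneg by (simp add: power_mono)

lemma q_cont: "continuous_on {0..T} q" using gf by (simp add: gauge_function_def)

lemma nontriv: "0 < t \<Longrightarrow> t \<le> T \<Longrightarrow> at t within {0<..T} \<noteq> bot"
  using T by (simp add: trivial_limit_within)

lemma Q'_nonneg: assumes "0 < t" "t \<le> T" shows "0 \<le> Q' t"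
proof -
  have "((\<lambda>y. ((q y)\<^sup>2 - (q t)\<^sup>2) / (y - t)) \<longlongrightarrow> Q' t) (at t within {0<..T})"
    using d1[of t] assms by (simp add: has_field_derivative_iff)
  moreover have "eventually (\<lambda>y. 0 \<le> ((q y)\<^sup>2 - (q t)\<^sup>2) / (y - t)) (at t within {0<..T})"
  proof -
    have "0 \<le> ((q y)\<^sup>2 - (q t)\<^sup>2) / (y - t)" if "y \<in> {0<..T}" for y
    proof (cases "y \<le> t")
      case True then show ?thesis using q2_mono[of y t] that assms
        by (intro divide_nonpos_nonpos) auto
    next
      case False then show ?thesis using q2_mono[of t y] that assms
        by (intro divide_nonneg_nonneg) auto
    qed
    then show ?thesis by (auto simp: eventually_at_filter)
  qed
  ultimately show ?thesis using nontriv[OF assms] by (rule tendsto_lowerbound)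
qed

lemma Q'_cont: "continuous_on {0<..T} Q'"
  by (rule DERIV_continuous_on[OF d2])

lemma Q'_isCont: "0 < t \<Longrightarrow> t < T \<Longrightarrow> isCont Q' t"
proof -
  assume a: "0 < t" "t < T"
  have c: "continuous_on {0<..<T} Q'" by (rule continuous_on_subset[OF Q'_cont]) auto
  have "t \<in> interior {0<..<T}" using a by (simp add: interior_open)
  then show ?thesis by (rule continuous_on_interior[OF c])
qed

lemma q2_deriv: assumes "0 < t" "t < T"
  shows "((\<lambda>s. (q s)\<^sup>2) has_real_derivative Q' t) (at t)"
proof -
  have "((\<lambda>s. (q s)\<^sup>2) has_real_derivative Q' t) (at t within {0<..<T})"
    using assms by (intro has_field_derivative_subset[OF d1]) auto
  moreover have "at t within {0<..<T} = at t" using assms by (intro at_within_open) auto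
  ultimately show ?thesis by simp
qed

definition qc :: "real \<Rightarrow> real" where "qc s = q (max 0 (min T s))"

lemma qc_cont: "continuous_on UNIV qc"
proof -
  have "continuous_on UNIV (\<lambda>s. max 0 (min T s))" by (intro continuous_intros)
  moreover have "(\<lambda>s. max 0 (min T s)) ` UNIV \<subseteq> {0..T}" using T by auto
  ultimately show ?thesis unfolding qc_def
    by (rule continuous_on_compose2[OF q_cont])
qed

lemma qc_eq: "0 \<le> s \<Longrightarrow> s \<le> T \<Longrightarrow> qc s = q s"
  by (simp add: qc_def)

end

context qset begin
lemma ftc:
  assumes c: "0 < c" "c \<le> a" "a \<le> T"
  shows "integrable lborel (\<lambda>s. indicator {0..c} s * Q' (a - s))
     \<and> (\<integral>s. indicator {0..c} s * Q' (a - s) \<partial>lborel) = (q a)\<^sup>2 - (q (a - c))\<^sup>2"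
proof -
  define F where "F s = - (qc (a - s))\<^sup>2" for s
  have qcc: "isCont qc x" for x using qc_cont by (simp add: continuous_on_eq_continuous_at)
  have Fc: "isCont F s" for s
    unfolding F_def
    by (intro continuous_intros isCont_o2[where f="\<lambda>x. a - x" and g=qc] qcc)
  have deriv: "DERIV F s :> Q' (a - s)" if "ereal 0 < ereal s" "ereal s < ereal c" for s
  proof -
    have s: "0 < s" "s < c" using that by auto
    have qd: "((\<lambda>s. (q s)\<^sup>2) has_real_derivative Q' (a - s)) (at (a - s))"
      using s c by (intro q2_deriv) auto
    have d: "((\<lambda>s. a - s) has_real_derivative -1) (at s)"
      by (auto intro!: derivative_eq_intros)
    from DERIV_chain2[OF qd d]
    have "((\<lambda>s. (q (a - s))\<^sup>2) has_real_derivative Q' (a - s) * -1) (at s)"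
      by simp
    from DERIV_minus[OF this]
    have "((\<lambda>s. - (q (a - s))\<^sup>2) has_real_derivative Q' (a - s)) (at s)" by simp
    then show ?thesis
      by (rule has_field_derivative_transform_within_open[where S="{0<..<c}"])
         (use s c in \<open>auto simp: F_def qc_eq\<close>)
  qed
  have cont: "isCont (\<lambda>s. Q' (a - s)) s" if "ereal 0 < ereal s" "ereal s < ereal c" for s
  proof -
    have "isCont Q' (a - s)" using that c by (intro Q'_isCont) auto
    moreover have "isCont (\<lambda>s. a - s) s" by (intro continuous_intros)
    ultimately show ?thesis using isCont_o2 by blast
  qed
  have nn: "AE s in lborel. ereal 0 < ereal s \<longrightarrow> ereal s < ereal c \<longrightarrow> 0 \<le> Q' (a - s)"
    using c by (intro AE_I2) (auto intro!: Q'_nonneg)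
  have A: "((F \<circ> real_of_ereal) \<longlongrightarrow> F 0) (at_right (ereal 0))"
    unfolding ereal_tendsto_simps1 using Fc[of 0] unfolding isCont_def
    by (rule tendsto_within_subset) simp
  have B: "((F \<circ> real_of_ereal) \<longlongrightarrow> F c) (at_left (ereal c))"
    unfolding ereal_tendsto_simps1 using Fc[of c] unfolding isCont_def
    by (rule tendsto_within_subset) simp
  note R = interval_integral_FTC_nonneg[of "ereal 0" "ereal c" F "\<lambda>s. Q' (a - s)", OF _ deriv cont nn A B]
  have si: "set_integrable lborel (einterval (ereal 0) (ereal c)) (\<lambda>s. Q' (a - s))"
    using R c by simp
  have vi: "(LBINT s=ereal 0..ereal c. Q' (a - s)) = F c - F 0" using R c by simp
  have eqf: "indicator (einterval (ereal 0) (ereal c)) s *\<^sub>R Q' (a - s) = indicator {0..c} s * Q' (a - s)"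
    if "s \<notin> {0, c}" for s
    using that by (auto simp: einterval_iff split: split_indicator)
  have I: "integrable lborel (\<lambda>s. indicator {0..c} s * Q' (a - s))"
  proof -
    have "integrable lborel (\<lambda>s. indicator (einterval (ereal 0) (ereal c)) s *\<^sub>R Q' (a - s))
      = integrable lborel (\<lambda>s. indicator {0..c} s * Q' (a - s))"
      by (rule integrable_discrete_difference[where X="{0,c}"]) (auto split: split_indicator)
    then show ?thesis using si unfolding set_integrable_def by simp
  qed
  have "(\<integral>s. indicator {0..c} s * Q' (a - s) \<partial>lborel) = 
     (\<integral>s. indicator (einterval (ereal 0) (ereal c)) s *\<^sub>R Q' (a - s) \<partial>lborel)"
    by (rule integral_discrete_difference[where X="{0,c}"]) (auto split: split_indicator)
  also have "\<dots> = (LBINT s=ereal 0..ereal c. Q' (a - s))"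
    unfolding interval_lebesgue_integral_def set_lebesgue_integral_def using c by simp
  also have "\<dots> = (q a)\<^sup>2 - (q (a - c))\<^sup>2"
    using vi c by (simp add: F_def qc_eq[of a] qc_eq[of "a - c"])
  finally show ?thesis using I by simp
qed

end

context qset begin

definition F :: "real \<Rightarrow> real \<Rightarrow> real" where
  "F a s = indicator {0..a} s * sqrt (Q' (a - s))"

lemma F_meas: assumes "0 \<le> a" "a \<le> T" shows "F a \<in> borel_measurable borel"
proof -
  have c: "continuous_on {0..<a} (\<lambda>s. sqrt (Q' (a - s)))"
  proof -
    have "continuous_on {0..<a} (\<lambda>s. a - s)" by (intro continuous_intros)
    moreover have "(\<lambda>s. a - s) ` {0..<a} \<subseteq> {0<..T}" using assms by auto
    ultimately have "continuous_on {0..<a} (\<lambda>s. Q' (a - s))"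
      by (rule continuous_on_compose2[OF Q'_cont])
    then show ?thesis by (intro continuous_intros)
  qed
  have m1: "(\<lambda>s. indicator {0..<a} s *\<^sub>R sqrt (Q' (a - s))) \<in> borel_measurable borel"
    by (rule borel_measurable_continuous_on_indicator[OF _ c]) simp
  have m2: "(\<lambda>s. indicator {a} s * sqrt (Q' 0)) \<in> borel_measurable borel"
    by measurable
  have "F a = (\<lambda>s. indicator {0..<a} s *\<^sub>R sqrt (Q' (a - s)) + indicator {a} s * sqrt (Q' 0))"
    using assms by (auto simp: F_def fun_eq_iff split: split_indicator)
  then show ?thesis using m1 m2 by simp
qed

lemma F_sq: assumes "0 \<le> a" "a \<le> T"
  shows "integrable lborel (\<lambda>s. F a s * F a s) \<and> (\<integral>s. F a s * F a s \<partial>lborel) = (q a)\<^sup>2"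
proof (cases "a = 0")
  case True
  have e: "F a s * F a s = 0" if "s \<notin> {0}" for s using that True by (simp add: F_def)
  have i: "integrable lborel (\<lambda>s. F a s * F a s) = integrable lborel (\<lambda>s::real. 0::real)"
    by (rule integrable_discrete_difference[where X="{0}"]) (use e in auto)
  have v: "(\<integral>s. F a s * F a s \<partial>lborel) = 0"
  proof (rule integral_eq_zero_AE)
    show "AE s in lborel. F a s * F a s = 0"
      by (rule AE_mp[OF AE_lborel_singleton[of 0]], intro AE_I2 impI) (use e in simp)
  qed
  show ?thesis using i v True q0 by simp
next
  case False
  then have a: "0 < a" using assms by simp
  have e: "indicator {0..a} s * Q' (a - s) = F a s * F a s" if "s \<notin> {a}" for s
  proof (cases "0 \<le> s \<and> s < a")
    case True
    then have "0 \<le> Q' (a - s)" using assms by (intro Q'_nonneg) auto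
    then show ?thesis using True by (simp add: F_def)
  next
    case False
    then show ?thesis using that by (auto simp: F_def split: split_indicator)
  qed
  note R = ftc[OF a order.refl assms(2)]
  have i: "integrable lborel (\<lambda>s. indicator {0..a} s * Q' (a - s)) = integrable lborel (\<lambda>s. F a s * F a s)"
    by (rule integrable_discrete_difference[where X="{a}"]) (use e in auto)
  have v: "(\<integral>s. indicator {0..a} s * Q' (a - s) \<partial>lborel) = (\<integral>s. F a s * F a s \<partial>lborel)"
    by (rule integral_discrete_difference[where X="{a}"]) (use e in auto)
  show ?thesis using R i v q0 by simp
qed

lemma F_prod_int: assumes "0 \<le> a" "a \<le> T" "0 \<le> b" "b \<le> T"
  shows "integrable lborel (\<lambda>s. F a s * F b s)"
proof (rule Bochner_Integration.integrable_bound)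
  show "integrable lborel (\<lambda>s. F a s * F a s + F b s * F b s)"
    using F_sq[OF assms(1,2)] F_sq[OF assms(3,4)] by (intro Bochner_Integration.integrable_add) auto
  show "(\<lambda>s. F a s * F b s) \<in> borel_measurable lborel"
    using F_meas[OF assms(1,2)] F_meas[OF assms(3,4)] by simp
  show "AE s in lborel. norm (F a s * F b s) \<le> norm (F a s * F a s + F b s * F b s)"
  proof (intro AE_I2)
    fix s
    have "\<bar>F a s * F b s\<bar> \<le> F a s * F a s + F b s * F b s"
    proof -
      have "2 * (F a s * F b s) \<le> F a s * F a s + F b s * F b s"
        using sum_squares_bound[of "F a s" "F b s"] by (simp add: power2_eq_square)
      moreover have "2 * (- (F a s * F b s)) \<le> F a s * F a s + F b s * F b s"
        using sum_squares_bound[of "- F a s" "F b s"] by (simp add: power2_eq_square)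
      ultimately show ?thesis by (simp add: abs_if)
    qed
    then show "norm (F a s * F b s) \<le> norm (F a s * F a s + F b s * F b s)" by simp
  qed
qed

lemma F_prod_lb: assumes "0 \<le> b" "b \<le> a" "a \<le> T"
  shows "(\<integral>s. F a s * F b s \<partial>lborel) \<ge> (q a)\<^sup>2 - (q (a - b))\<^sup>2
     \<and> (\<integral>s. F a s * F b s \<partial>lborel) \<ge> 0"
proof -
  have I: "integrable lborel (\<lambda>s. F a s * F b s)" using assms by (intro F_prod_int) auto
  have nn: "AE s in lborel. 0 \<le> F a s * F b s"
    using AE_lborel_singleton[of b]
  proof (rule AE_mp, intro AE_I2 impI)
    fix s :: real assume "s \<noteq> b"
    show "0 \<le> F a s * F b s"
    proof (cases "0 \<le> s \<and> s < b")
      case True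
      then have "0 \<le> Q' (a - s)" "0 \<le> Q' (b - s)" using assms by (auto intro!: Q'_nonneg)
      then show ?thesis using True assms by (simp add: F_def)
    next
      case False
      then show ?thesis using \<open>s \<noteq> b\<close> by (auto simp: F_def split: split_indicator)
    qed
  qed
  have pos: "(\<integral>s. F a s * F b s \<partial>lborel) \<ge> 0" by (rule integral_nonneg_AE[OF nn])
  show ?thesis
  proof (cases "b = 0")
    case True
    then show ?thesis using pos by simp
  next
    case False
    then have b: "0 < b" using assms by simp
    note R = ftc[OF b assms(2,3)]
    have le: "AE s in lborel. indicator {0..b} s * Q' (a - s) \<le> F a s * F b s"
      using AE_lborel_singleton[of b]
    proof (rule AE_mp, intro AE_I2 impI)
      fix s :: real assume "s \<noteq> b"
      show "indicator {0..b} s * Q' (a - s) \<le> F a s * F b s"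
      proof (cases "0 \<le> s \<and> s < b")
        case True
        then have h: "0 \<le> Q' (a - s)" "Q' (a - s) \<le> Q' (b - s)" using assms
          using Q'_nonneg[of "a - s"] mono[of "b - s" "a - s"] by auto
        then have "sqrt (Q' (a - s)) \<le> sqrt (Q' (b - s))" by simp
        then have "sqrt (Q' (a - s)) * sqrt (Q' (a - s)) \<le> sqrt (Q' (a - s)) * sqrt (Q' (b - s))"
          using h by (intro mult_left_mono) auto
        moreover have "F a s = sqrt (Q' (a - s))" "F b s = sqrt (Q' (b - s))" "indicator {0..b} s = (1::real)"
          using True assms by (auto simp: F_def)
        moreover have "sqrt (Q' (a - s)) * sqrt (Q' (a - s)) = Q' (a - s)"
          using h(1) by (simp add: real_sqrt_mult_self)
        ultimately show ?thesis by simp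
      next
        case False
        then show ?thesis using \<open>s \<noteq> b\<close> by (auto simp: F_def split: split_indicator)
      qed
    qed
    have "(q a)\<^sup>2 - (q (a - b))\<^sup>2 \<le> (\<integral>s. F a s * F b s \<partial>lborel)"
    proof -
      have "(\<integral>s. indicator {0..b} s * Q' (a - s) \<partial>lborel) \<le> (\<integral>s. F a s * F b s \<partial>lborel)"
        by (rule integral_mono_AE[OF _ I le]) (use R in blast)
      then show ?thesis using R by simp
    qed
    then show ?thesis using pos by simp
  qed
qed

end

lemma prod_diff_bound:
  fixes M E :: "'i \<Rightarrow> real"
  assumes "finite I"
    and E0: "\<And>i. i \<in> I \<Longrightarrow> 0 \<le> E i" and EM: "\<And>i. i \<in> I \<Longrightarrow> E i \<le> M i"
    and MQ: "\<And>i. i \<in> I \<Longrightarrow> M i \<le> Q" and MD: "\<And>i. i \<in> I \<Longrightarrow> M i - E i \<le> D"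
  shows "(\<Prod>i\<in>I. M i) - (\<Prod>i\<in>I. E i) \<le> real (card I) * Q ^ (card I - 1) * D"
  using assms
proof (induction I rule: finite_induct)
  case empty
  then show ?case by simp
next
  case (insert i I)
  let ?n = "card I"
  have IH: "(\<Prod>i\<in>I. M i) - (\<Prod>i\<in>I. E i) \<le> real ?n * Q ^ (?n - 1) * D"
    using insert by auto
  have Ei: "0 \<le> E i" "E i \<le> M i" "M i \<le> Q" "M i - E i \<le> D" using insert.prems by auto
  have PE: "0 \<le> (\<Prod>i\<in>I. E i)" using insert.prems by (intro prod_nonneg) auto
  have PEM: "(\<Prod>i\<in>I. E i) \<le> (\<Prod>i\<in>I. M i)" using insert.prems by (intro prod_mono) auto
  have PEQ: "(\<Prod>i\<in>I. E i) \<le> Q ^ ?n"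
  proof -
    have "(\<Prod>i\<in>I. E i) \<le> (\<Prod>i\<in>I. Q)" using insert.prems
      by (intro prod_mono) (auto intro: order_trans)
    then show ?thesis by simp
  qed
  have "(\<Prod>i\<in>insert i I. M i) - (\<Prod>i\<in>insert i I. E i)
      = M i * ((\<Prod>i\<in>I. M i) - (\<Prod>i\<in>I. E i)) + (M i - E i) * (\<Prod>i\<in>I. E i)"
    using insert by (simp add: algebra_simps)
  also have "\<dots> \<le> Q * (real ?n * Q ^ (?n - 1) * D) + D * Q ^ ?n"
  proof (rule add_mono)
    show "M i * ((\<Prod>i\<in>I. M i) - (\<Prod>i\<in>I. E i)) \<le> Q * (real ?n * Q ^ (?n - 1) * D)"
      using Ei PEM IH by (intro mult_mono) auto
    show "(M i - E i) * (\<Prod>i\<in>I. E i) \<le> D * Q ^ ?n"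
      using Ei PE PEQ by (intro mult_mono) auto
  qed
  also have "\<dots> = real (card (insert i I)) * Q ^ (card (insert i I) - 1) * D"
    using insert by (cases ?n) (auto simp: algebra_simps)
  finally show ?case .
qed

lemma integrable_prod_sq:
  fixes f g :: "'a \<Rightarrow> real"
  assumes "integrable M (\<lambda>x. f x * f x)" "integrable M (\<lambda>x. g x * g x)"
    "f \<in> borel_measurable M" "g \<in> borel_measurable M"
  shows "integrable M (\<lambda>x. f x * g x)"
proof (rule Bochner_Integration.integrable_bound)
  show "integrable M (\<lambda>x. f x * f x + g x * g x)"
    using assms by (intro Bochner_Integration.integrable_add)
  show "(\<lambda>x. f x * g x) \<in> borel_measurable M" using assms by simp
  show "AE x in M. norm (f x * g x) \<le> norm (f x * f x + g x * g x)"
  proof (intro AE_I2)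
    fix x
    have "2 * (f x * g x) \<le> f x * f x + g x * g x"
      using sum_squares_bound[of "f x" "g x"] by (simp add: power2_eq_square)
    moreover have "2 * (- (f x * g x)) \<le> f x * f x + g x * g x"
      using sum_squares_bound[of "- f x" "g x"] by (simp add: power2_eq_square)
    ultimately show "norm (f x * g x) \<le> norm (f x * f x + g x * g x)" by (simp add: abs_if)
  qed
qed

lemma wn_sq_int:
  assumes wn: "white_noise_integral M W" and h: "sq_integrable h"
  shows "integrable M (\<lambda>\<omega>. W h \<omega> * W h \<omega>)"
proof -
  have meas: "W h \<in> borel_measurable M" using wn h by (simp add: white_noise_integral_def)
  have cov: "(\<integral>\<omega>. W h \<omega> * W h \<omega> \<partial>M) = (\<integral>u. h u * h u \<partial>lborel)"
    using wn h by (simp add: white_noise_integral_def)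
  show ?thesis
  proof (cases "(\<integral>u. h u * h u \<partial>lborel) = 0")
    case True
    then have "(\<integral>u. (h u)\<^sup>2 \<partial>lborel) = 0" by (simp add: power2_eq_square)
    then have ae: "AE \<omega> in M. W h \<omega> = 0" using wn h by (simp add: white_noise_integral_def)
    have "integrable M (\<lambda>\<omega>. W h \<omega> * W h \<omega>) = integrable M (\<lambda>\<omega>. 0::real)"
      by (rule integrable_cong_AE) (use meas ae in \<open>auto elim: AE_mp\<close>)
    then show ?thesis by simp
  next
    case False
    then show ?thesis using cov not_integrable_integral_eq by fastforce
  qed
qed

lemma wn_expand:
  assumes wn: "white_noise_integral M W" and h: "sq_integrable h" and g: "sq_integrable g"
  shows "(\<integral>\<omega>. (W h \<omega> - W g \<omega>)\<^sup>2 \<partial>M) =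
    (\<integral>u. h u * h u \<partial>lborel) - 2 * (\<integral>u. h u * g u \<partial>lborel) + (\<integral>u. g u * g u \<partial>lborel)"
proof -
  have mh: "W h \<in> borel_measurable M" using wn h by (simp add: white_noise_integral_def)
  have mg: "W g \<in> borel_measurable M" using wn g by (simp add: white_noise_integral_def)
  have ih: "integrable M (\<lambda>\<omega>. W h \<omega> * W h \<omega>)" by (rule wn_sq_int[OF wn h])
  have ig: "integrable M (\<lambda>\<omega>. W g \<omega> * W g \<omega>)" by (rule wn_sq_int[OF wn g])
  have ihg: "integrable M (\<lambda>\<omega>. W h \<omega> * W g \<omega>)" by (rule integrable_prod_sq[OF ih ig mh mg])
  have cov: "\<And>h g. sq_integrable h \<Longrightarrow> sq_integrable g \<Longrightarrow>
       (\<integral>\<omega>. W h \<omega> * W g \<omega> \<partial>M) = (\<integral>u. h u * g u \<partial>lborel)"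
    using wn by (simp add: white_noise_integral_def)
  have e: "(\<lambda>\<omega>. (W h \<omega> - W g \<omega>)\<^sup>2) = (\<lambda>\<omega>. (W h \<omega> * W h \<omega> - 2 * (W h \<omega> * W g \<omega>)) + W g \<omega> * W g \<omega>)"
    by (auto simp: fun_eq_iff power2_eq_square algebra_simps)
  have "(\<integral>\<omega>. (W h \<omega> - W g \<omega>)\<^sup>2 \<partial>M) =
     (\<integral>\<omega>. W h \<omega> * W h \<omega> \<partial>M) - 2 * (\<integral>\<omega>. W h \<omega> * W g \<omega> \<partial>M) + (\<integral>\<omega>. W g \<omega> * W g \<omega> \<partial>M)"
    unfolding e using ih ig ihg
    by (simp add: Bochner_Integration.integral_add Bochner_Integration.integral_diff)
  then show ?thesis using cov[OF h h] cov[OF h g] cov[OF g g] by simp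
qed

lemma infnorm_le_cart: "(\<And>l. \<bar>z$l\<bar> \<le> T) \<Longrightarrow> infnorm (z::real^'d::finite) \<le> T"
  unfolding infnorm_Max by (subst Max_le_iff) (auto simp: Basis_vec_def inner_axis)

context qset begin

lemma kernel_eq: "sheet_kernel (\<lambda>t. sqrt (Q' t)) x = (\<lambda>u::real^'d::finite. \<Prod>l\<in>UNIV. F (x$l) (u$l))"
proof
  fix u :: "real^'d"
  show "sheet_kernel (\<lambda>t. sqrt (Q' t)) x u = (\<Prod>l\<in>UNIV. F (x$l) (u$l))"
  proof (cases "\<forall>l. 0 \<le> u$l \<and> u$l \<le> x$l")
    case True
    then show ?thesis by (simp add: sheet_kernel_def F_def)
  next
    case False
    then obtain l where "\<not> (0 \<le> u$l \<and> u$l \<le> x$l)" by blast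
    then have "F (x$l) (u$l) = 0" by (simp add: F_def)
    then have p0: "(\<Prod>l\<in>UNIV. F (x$l) (u$l)) = 0" by (intro prod_zero) auto
    show ?thesis unfolding sheet_kernel_def if_not_P[OF False] using p0 by simp
  qed
qed

lemma kernel_meas: assumes "\<forall>l. 0 \<le> x$l \<and> x$l \<le> T"
  shows "(\<lambda>u::real^'d::finite. \<Prod>l\<in>UNIV. F (x$l) (u$l)) \<in> borel_measurable lborel"
proof (rule borel_measurable_prod)
  fix l
  have c: "(\<lambda>u::real^'d. u$l) \<in> borel_measurable borel"
    by (rule borel_measurable_continuous_onI) (rule linear_continuous_on[OF bounded_linear_vec_nth])
  have "F (x$l) \<in> borel_measurable borel" using assms by (intro F_meas) auto
  then show "(\<lambda>u::real^'d. F (x$l) (u$l)) \<in> borel_measurable lborel"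
    using measurable_compose[OF c] by simp
qed

lemma kernel_int: assumes "\<forall>l. 0 \<le> x$l \<and> x$l \<le> T" "\<forall>l. 0 \<le> y$l \<and> y$l \<le> T"
  shows "integrable lborel (\<lambda>u::real^'d::finite. (\<Prod>l\<in>UNIV. F (x$l) (u$l)) * (\<Prod>l\<in>UNIV. F (y$l) (u$l)))
    \<and> (\<integral>u. (\<Prod>l\<in>UNIV. F (x$l) (u$l)) * (\<Prod>l\<in>UNIV. F (y$l) (u$l)) \<partial>lborel)
       = (\<Prod>l\<in>UNIV. \<integral>s. F (x$l) s * F (y$l) s \<partial>lborel)"
proof -
  have e: "(\<Prod>l\<in>UNIV. F (x$l) (u$l)) * (\<Prod>l\<in>UNIV. F (y$l) (u$l)) = (\<Prod>l\<in>UNIV. F (x$l) (u$l) * F (y$l) (u$l))"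
    for u :: "real^'d" by (simp add: prod.distrib)
  have "\<And>l. integrable lborel (\<lambda>s. F (x$l) s * F (y$l) s)"
    using assms by (intro F_prod_int) auto
  from vec_prod_integral[of "\<lambda>l s. F (x$l) s * F (y$l) s", OF this]
  show ?thesis unfolding e by simp
qed

end

theorem proposition3p1:
  fixes T :: real and q Q' Q'' :: "real \<Rightarrow> real"
    and M :: "'w measure" and W :: "(real^'d::finite \<Rightarrow> real) \<Rightarrow> 'w \<Rightarrow> real"
    and x y :: "real^'d"
  assumes "T > 0"
    and "gauge_function T q"
    and "\<And>t. t \<in> {0<..T} \<Longrightarrow> ((\<lambda>s. (q s)\<^sup>2) has_real_derivative Q' t) (at t within {0<..T})"
    and "\<And>t. t \<in> {0<..T} \<Longrightarrow> (Q' has_real_derivative Q'' t) (at t within {0<..T})"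
    and "continuous_on {0<..T} Q''"
    and "\<And>s t. 0 < s \<Longrightarrow> s \<le> t \<Longrightarrow> t \<le> T \<Longrightarrow> Q' t \<le> Q' s"
    and "white_noise_integral M W"
    and "\<forall>l. 0 \<le> x$l \<and> x$l \<le> T"
    and "\<forall>l. 0 \<le> y$l \<and> y$l \<le> T"
  shows "(\<integral>\<omega>. (q_brownian_sheet W (\<lambda>t. sqrt (Q' t)) x \<omega>
                 - q_brownian_sheet W (\<lambda>t. sqrt (Q' t)) y \<omega>)\<^sup>2 \<partial>M)
         \<le> (2 * real CARD('d) * (q T) ^ (2 * (CARD('d) - 1))) * (q (infnorm (x - y)))\<^sup>2"
proof -
  interpret qset T q Q' Q''
    using assms(1-4,6) by unfold_locales auto
  note xb = assms(8) and yb = assms(9)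
  let ?K = "sheet_kernel (\<lambda>t. sqrt (Q' t))"
  have sq: "sq_integrable (?K z)" if zb: "\<forall>l. 0 \<le> z$l \<and> z$l \<le> T" for z :: "real^'d"
  proof -
    have "integrable lborel (\<lambda>u. (?K z u)\<^sup>2)"
      using kernel_int[OF zb zb] unfolding kernel_eq by (simp add: power2_eq_square)
    then show ?thesis unfolding sq_integrable_def using kernel_meas[OF zb] unfolding kernel_eq by simp
  qed
  have int_eq: "(\<integral>u. ?K z u * ?K w u \<partial>lborel) = (\<Prod>l\<in>UNIV. \<integral>s. F (z$l) s * F (w$l) s \<partial>lborel)"
    if "\<forall>l. 0 \<le> z$l \<and> z$l \<le> T" "\<forall>l. 0 \<le> w$l \<and> w$l \<le> T" for z w :: "real^'d"
    using kernel_int[OF that] unfolding kernel_eq by simp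
  define A where "A l = (q (x$l))\<^sup>2" for l
  define B where "B l = (q (y$l))\<^sup>2" for l
  define C where "C l = (\<integral>s. F (x$l) s * F (y$l) s \<partial>lborel)" for l
  define D where "D = (q (infnorm (x - y)))\<^sup>2"
  define Mx where "Mx l = max (A l) (B l)" for l
  define E where "E l = max (Mx l - D) 0" for l
  define Q where "Q = (q T)\<^sup>2"
  have LHS: "(\<integral>\<omega>. (q_brownian_sheet W (\<lambda>t. sqrt (Q' t)) x \<omega>
                 - q_brownian_sheet W (\<lambda>t. sqrt (Q' t)) y \<omega>)\<^sup>2 \<partial>M)
        = (\<Prod>l\<in>UNIV. A l) - 2 * (\<Prod>l\<in>UNIV. C l) + (\<Prod>l\<in>UNIV. B l)"
  proof -
    have "(\<integral>\<omega>. (q_brownian_sheet W (\<lambda>t. sqrt (Q' t)) x \<omega>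
                 - q_brownian_sheet W (\<lambda>t. sqrt (Q' t)) y \<omega>)\<^sup>2 \<partial>M)
       = (\<integral>u. ?K x u * ?K x u \<partial>lborel) - 2 * (\<integral>u. ?K x u * ?K y u \<partial>lborel) + (\<integral>u. ?K y u * ?K y u \<partial>lborel)"
      unfolding q_brownian_sheet_def by (rule wn_expand[OF assms(7) sq[OF xb] sq[OF yb]])
    moreover have "(\<integral>u. ?K x u * ?K x u \<partial>lborel) = (\<Prod>l\<in>UNIV. A l)"
      unfolding int_eq[OF xb xb] A_def using xb F_sq by (intro prod.cong) auto
    moreover have "(\<integral>u. ?K y u * ?K y u \<partial>lborel) = (\<Prod>l\<in>UNIV. B l)"
      unfolding int_eq[OF yb yb] B_def using yb F_sq by (intro prod.cong) auto
    moreover have "(\<integral>u. ?K x u * ?K y u \<partial>lborel) = (\<Prod>l\<in>UNIV. C l)"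
      unfolding int_eq[OF xb yb] C_def by simp
    ultimately show ?thesis by simp
  qed
  have Dl: "(q \<bar>x$l - y$l\<bar>)\<^sup>2 \<le> D" for l
  proof -
    have "\<bar>(x - y)$l\<bar> \<le> infnorm (x - y)" by (rule component_le_infnorm_cart)
    moreover have "infnorm (x - y) \<le> T"
    proof (rule infnorm_le_cart)
      fix l
      have "0 \<le> x$l" "x$l \<le> T" "0 \<le> y$l" "y$l \<le> T" using xb yb by auto
      then show "\<bar>(x - y)$l\<bar> \<le> T" by (simp add: abs_le_iff)
    qed
    ultimately show ?thesis unfolding D_def by (intro q2_mono) auto
  qed
  have D0: "0 \<le> D" unfolding D_def by simp
  have facts: "0 \<le> A l \<and> A l \<le> Mx l \<and> 0 \<le> B l \<and> B l \<le> Mx l \<and> Mx l \<le> Q \<and> 0 \<le> C l \<and> Mx l - D \<le> C l" for l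
  proof -
    have xl: "0 \<le> x$l" "x$l \<le> T" and yl: "0 \<le> y$l" "y$l \<le> T" using xb yb by auto
    have MQ: "Mx l \<le> Q" unfolding Mx_def A_def B_def Q_def
      using xl yl by (auto intro!: q2_mono)
    have CC: "0 \<le> C l \<and> Mx l - D \<le> C l"
    proof (cases "y$l \<le> x$l")
      case True
      then have "Mx l = A l" unfolding Mx_def A_def B_def using q2_mono[of "y$l" "x$l"] xl yl by (simp add: max_def)
      moreover have "(q (x$l))\<^sup>2 - (q (x$l - y$l))\<^sup>2 \<le> C l \<and> 0 \<le> C l"
        unfolding C_def using F_prod_lb[of "y$l" "x$l"] True xl yl by simp
      moreover have "(q (x$l - y$l))\<^sup>2 \<le> D" using Dl[of l] True by simp
      ultimately show ?thesis unfolding A_def by linarith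
    next
      case False
      then have "Mx l = B l" unfolding Mx_def A_def B_def using q2_mono[of "x$l" "y$l"] xl yl by (simp add: max_def)
      moreover have "C l = (\<integral>s. F (y$l) s * F (x$l) s \<partial>lborel)"
        unfolding C_def by (simp add: mult.commute)
      moreover have "(q (y$l))\<^sup>2 - (q (y$l - x$l))\<^sup>2 \<le> (\<integral>s. F (y$l) s * F (x$l) s \<partial>lborel)
          \<and> 0 \<le> (\<integral>s. F (y$l) s * F (x$l) s \<partial>lborel)"
        using F_prod_lb[of "x$l" "y$l"] False xl yl by simp
      moreover have "(q (y$l - x$l))\<^sup>2 \<le> D" using Dl[of l] False by simp
      ultimately show ?thesis unfolding B_def by linarith
    qed
    show ?thesis using MQ CC unfolding Mx_def A_def B_def by auto
  qed
  have pA: "(\<Prod>l\<in>UNIV. A l) \<le> (\<Prod>l\<in>UNIV. Mx l)" using facts by (intro prod_mono) auto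
  have pB: "(\<Prod>l\<in>UNIV. B l) \<le> (\<Prod>l\<in>UNIV. Mx l)" using facts by (intro prod_mono) auto
  have pE: "(\<Prod>l\<in>UNIV. E l) \<le> (\<Prod>l\<in>UNIV. C l)" using facts unfolding E_def by (intro prod_mono) auto
  have pD: "(\<Prod>l\<in>UNIV. Mx l) - (\<Prod>l\<in>UNIV. E l) \<le> real (card (UNIV::'d set)) * Q ^ (card (UNIV::'d set) - 1) * D"
  proof (rule prod_diff_bound)
    fix l :: 'd
    have f: "0 \<le> A l" "A l \<le> Mx l" "Mx l \<le> Q" using facts[of l] by auto
    show "0 \<le> E l" "E l \<le> Mx l" "Mx l \<le> Q" "Mx l - E l \<le> D"
      using f D0 unfolding E_def by auto
  qed simp
  have "(\<Prod>l\<in>UNIV. A l) - 2 * (\<Prod>l\<in>UNIV. C l) + (\<Prod>l\<in>UNIV. B l)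
     \<le> 2 * (real CARD('d) * Q ^ (CARD('d) - 1) * D)"
    using pA pB pE pD by linarith
  also have "\<dots> = (2 * real CARD('d) * (q T) ^ (2 * (CARD('d) - 1))) * (q (infnorm (x - y)))\<^sup>2"
    unfolding Q_def D_def by (simp add: power_mult)
  finally show ?thesis using LHS by simp
qed

end
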